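(* Let $G$ be a connected graph with $N$ vertices and maximum degree $\Delta$, let $k,R$ be positive integers with $N>2k(\Delta^{4R}+1)$, and let $H$ be a $k$-local operator (not necessarily Hermitian) of range at most $R$ on the qubits at the vertices of $G$. If $H|W^p\rangle=E_p|W^p\rangle$ with $E_p\in\mathbb{C}$ for all $p\in\{0,1,\dots,N\}$, then there exist constants $\Omega,\omega\in\mathbb{C}$ with $E_p=\Omega+\omega p$ for all $p\in\{0,1,\dots,N\}$.
   Context: System of $N$ qubits on the vertices of a graph $G$ with local basis $|0\rangle,|1\rangle$. For each vertex $i$, $s_i^\dagger$ acts on $i$ as $s^\dagger|0\rangle=|1\rangle$, $s^\dagger|1\rangle=0$, $s_i=(s_i^\dagger)^\dagger$; $|\overline 0\rangle=|0\rangle^{\otimes N}$. Distances are graph distances. Every operator has a unique expansion in normal-ordered strings $s^\dagger_{j_1}\cdots s^\dagger_{j_n}s_{k_1}\cdots s_{k_m}$ (the $j$'s pairwise distinct, the $k$'s pairwise distinct, overlaps allowed), whose sites are $\{j_1,\dots,j_n,k_1,\dots,k_m\}$. A string has range $R$, where $R$ is the smallest positive integer with all pairwise distances between its sites $<R$; an operator has range at most $R$ if every string with nonzero coefficient has range at most $R$, and is $k$-local if every such string involves at most $k$ distinct sites. $S^\dagger=\sum_i s_i^\dagger$ and $|W^p\rangle$ is the normalization of $(S^\dagger)^p|\overline 0\rangle$ for $p=0,\dots,N$. *)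

theory Defs
  imports Complex_Main
begin

definition simple_graph :: "'a set \<Rightarrow> ('a \<Rightarrow> 'a \<Rightarrow> bool) \<Rightarrow> bool" where
  "simple_graph V E \<longleftrightarrow> finite V \<and> (\<forall>u v. E u v \<longrightarrow> u \<in> V \<and> v \<in> V)
     \<and> (\<forall>u v. E u v \<longrightarrow> E v u) \<and> (\<forall>u. \<not> E u u)"

definition connected_graph :: "'a set \<Rightarrow> ('a \<Rightarrow> 'a \<Rightarrow> bool) \<Rightarrow> bool" where
  "connected_graph V E \<longleftrightarrow> (\<forall>u\<in>V. \<forall>v\<in>V. \<exists>n. (E ^^ n) u v)"

definition gdist :: "('a \<Rightarrow> 'a \<Rightarrow> bool) \<Rightarrow> 'a \<Rightarrow> 'a \<Rightarrow> nat" where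
  "gdist E u v = (LEAST n. (E ^^ n) u v)"

definition max_degree :: "'a set \<Rightarrow> ('a \<Rightarrow> 'a \<Rightarrow> bool) \<Rightarrow> nat" where
  "max_degree V E = Max ((\<lambda>v. card {w. E v w}) ` V)"

definition string_range :: "('a \<Rightarrow> 'a \<Rightarrow> bool) \<Rightarrow> 'a set \<Rightarrow> nat" where
  "string_range E S = (LEAST R. 0 < R \<and> (\<forall>i\<in>S. \<forall>j\<in>S. gdist E i j < R))"

text \<open>Computational basis states are indexed by the set of sites in state 1.
  Operators are matrices (first argument: output/row state, second: input/column state);
  vectors are functions from basis states to complex amplitudes.  Only subsets of V matter.\<close>

definition apply_op :: "'a set \<Rightarrow> ('a set \<Rightarrow> 'a set \<Rightarrow> complex) \<Rightarrow> ('a set \<Rightarrow> complex) \<Rightarrow> ('a set \<Rightarrow> complex)" where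
  "apply_op V M \<psi> = (\<lambda>y. \<Sum>x\<in>Pow V. M y x * \<psi> x)"

text \<open>Matrix of the normal-ordered string  (prod_{j in J} s_j^dagger)(prod_{k in K} s_k):
  first annihilate all sites of K (requires them to be 1), then create all sites of J
  (requires them to be 0).\<close>
definition nstring :: "'a set \<Rightarrow> 'a set \<Rightarrow> 'a set \<Rightarrow> 'a set \<Rightarrow> complex" where
  "nstring J K y x = (if K \<subseteq> x \<and> J \<inter> (x - K) = {} \<and> y = (x - K) \<union> J then 1 else 0)"

definition local_op :: "'a set \<Rightarrow> ('a \<Rightarrow> 'a \<Rightarrow> bool) \<Rightarrow> nat \<Rightarrow> nat \<Rightarrow> ('a set \<Rightarrow> 'a set \<Rightarrow> complex) \<Rightarrow> bool" where
  "local_op V E k R H \<longleftrightarrow>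
     (\<exists>c :: 'a set \<Rightarrow> 'a set \<Rightarrow> complex.
        (\<forall>J K. c J K \<noteq> 0 \<longrightarrow> J \<subseteq> V \<and> K \<subseteq> V \<and> card (J \<union> K) \<le> k
                            \<and> string_range E (J \<union> K) \<le> R)
      \<and> (\<forall>y x. y \<subseteq> V \<longrightarrow> x \<subseteq> V \<longrightarrow>
            H y x = (\<Sum>J\<in>Pow V. \<Sum>K\<in>Pow V. c J K * nstring J K y x)))"

definition Sdag :: "'a set \<Rightarrow> 'a set \<Rightarrow> 'a set \<Rightarrow> complex" where
  "Sdag V = (\<lambda>y x. \<Sum>v\<in>V. nstring {v} {} y x)"

definition vac :: "'a set \<Rightarrow> complex" where
  "vac = (\<lambda>x. if x = {} then 1 else 0)"

definition vnorm :: "'a set \<Rightarrow> ('a set \<Rightarrow> complex) \<Rightarrow> real" where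
  "vnorm V \<psi> = sqrt (\<Sum>x\<in>Pow V. (cmod (\<psi> x))\<^sup>2)"

definition Wstate :: "'a set \<Rightarrow> nat \<Rightarrow> 'a set \<Rightarrow> complex" where
  "Wstate V p = (let \<phi> = (apply_op V (Sdag V) ^^ p) vac
                 in (\<lambda>x. \<phi> x / complex_of_real (vnorm V \<phi>)))"

end

theory Submission
  imports Defs
begin



lemma deg_bound:
  assumes sg: "simple_graph V E"
  shows "finite {x. E w x} \<and> card {x. E w x} \<le> max_degree V E"
proof -
  have fin: "finite V" and ed: "\<And>u v. E u v \<Longrightarrow> u \<in> V \<and> v \<in> V" using sg unfolding simple_graph_def by auto
  have f: "finite {x. E w x}" by (rule finite_subset[OF _ fin]) (auto dest: ed)
  show ?thesis
  proof (cases "w \<in> V")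
    case True
    then have "card {x. E w x} \<in> (\<lambda>v. card {w. E v w}) ` V" by (rule imageI)
    then have "card {x. E w x} \<le> max_degree V E" unfolding max_degree_def
      by (rule Max_ge[OF finite_imageI[OF fin]])
    then show ?thesis using f by blast
  next
    case False
    then have "{x. E w x} = {}" using ed by auto
    then show ?thesis by simp
  qed
qed

lemma ball_card:
  assumes sg: "simple_graph V E"
  shows "finite {v. (E ^^ n) u v} \<and> card {v. (E ^^ n) u v} \<le> max_degree V E ^ n"
proof (induction n)
  case 0
  then show ?case by simp
next
  case (Suc n)
  have eq: "{v. (E ^^ Suc n) u v} = (\<Union>w\<in>{v. (E ^^ n) u v}. {x. E w x})" by auto
  have fin: "finite {v. (E ^^ Suc n) u v}" unfolding eq using Suc deg_bound[OF sg] by auto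
  have "card {v. (E ^^ Suc n) u v} \<le> (\<Sum>w\<in>{v. (E ^^ n) u v}. card {x. E w x})"
    unfolding eq using Suc by (intro card_UN_le) auto
  also have "\<dots> \<le> (\<Sum>w\<in>{v. (E ^^ n) u v}. max_degree V E)"
    using deg_bound[OF sg] by (intro sum_mono) auto
  also have "\<dots> = card {v. (E ^^ n) u v} * max_degree V E" by simp
  also have "\<dots> \<le> max_degree V E ^ n * max_degree V E" using Suc by simp
  finally show ?case using fin by (simp add: mult.commute)
qed

lemma geom_le: "(2::nat) \<le> d \<Longrightarrow> (\<Sum>n<R. d ^ n) \<le> d ^ R"
proof (induction R)
  case 0 then show ?case by simp
next
  case (Suc R)
  then have "(\<Sum>n<Suc R. d ^ n) \<le> 2 * d ^ R" by simp
  also have "\<dots> \<le> d * d ^ R" using Suc.prems by simp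
  finally show ?case by simp
qed

lemma low_deg_step:
  assumes sg: "simple_graph V E" and d: "max_degree V E \<le> 1"
    and "E a b" "E b c" shows "c = a"
proof -
  have s: "E b a" using assms sg unfolding simple_graph_def by auto
  have "finite {x. E b x}" "card {x. E b x} \<le> 1" using deg_bound[OF sg, of b] d by auto
  then have "\<forall>x\<in>{x. E b x}. \<forall>y\<in>{x. E b x}. x = y" using card_le_Suc0_iff_eq by auto
  then show ?thesis using s assms(4) by blast
qed

lemma low_deg_reach:
  assumes sg: "simple_graph V E" and d: "max_degree V E \<le> 1"
  shows "(E ^^ n) u v \<Longrightarrow> v = u \<or> E u v"
proof (induction n arbitrary: v rule: less_induct)
  case (less n)
  show ?case
  proof (cases n)
    case 0 then show ?thesis using less by simp
  next
    case (Suc m)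
    note nm = this
    show ?thesis
    proof (cases m)
      case 0 then show ?thesis using less nm by (auto simp: relcompp_apply)
    next
      case (Suc j)
      from less.prems nm Suc obtain a b where "(E ^^ j) u a" "E a b" "E b v"
        by (auto simp: relcompp_apply)
      then have "v = a" using low_deg_step[OF sg d] by blast
      then show ?thesis using less.IH[of j a] \<open>(E ^^ j) u a\<close> nm Suc by simp
    qed
  qed
qed

lemma far_pair:
  assumes sg: "simple_graph V E" and cg: "connected_graph V E" and R: "0 < R"
    and N: "card V > 2 * (max_degree V E ^ (4 * R) + 1)"
  shows "\<exists>u\<in>V. \<exists>v\<in>V. R \<le> gdist E u v"
proof (rule ccontr)
  assume neg: "\<not> ?thesis"
  have fin: "finite V" using sg unfolding simple_graph_def by auto
  have "V \<noteq> {}" using N by auto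
  then obtain u where u: "u \<in> V" by auto
  define d where "d = max_degree V E"
  show False
  proof (cases "d \<le> 1")
    case True
    have sub: "V \<subseteq> {u} \<union> {v. E u v}"
    proof
      fix v assume "v \<in> V"
      then obtain n where "(E ^^ n) u v" using cg u unfolding connected_graph_def by blast
      then show "v \<in> {u} \<union> {v. E u v}" using low_deg_reach[OF sg] True d_def by auto
    qed
    have c2: "card ({u} \<union> {v. E u v}) \<le> 2"
    proof -
      have "card ({u} \<union> {v. E u v}) \<le> card {u} + card {v. E u v}" by (rule card_Un_le)
      also have "\<dots> \<le> 2" using deg_bound[OF sg, of u] True d_def by simp
      finally show ?thesis .
    qed
    have "finite ({u} \<union> {v. E u v})" using deg_bound[OF sg, of u] by simp
    then have "card V \<le> 2" using card_mono[OF _ sub] c2 by simp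
    then show False using N by simp
  next
    case False
    have "V \<subseteq> (\<Union>n\<in>{..<R}. {v. (E ^^ n) u v})"
    proof
      fix v assume v: "v \<in> V"
      then obtain n where n: "(E ^^ n) u v" using cg u unfolding connected_graph_def by blast
      then have "(E ^^ gdist E u v) u v" unfolding gdist_def by (rule LeastI)
      moreover have "gdist E u v < R" using neg u v by (simp add: not_le)
      ultimately show "v \<in> (\<Union>n\<in>{..<R}. {v. (E ^^ n) u v})" by auto
    qed
    then have "card V \<le> card (\<Union>n\<in>{..<R}. {v. (E ^^ n) u v})"
      using ball_card[OF sg] by (intro card_mono) auto
    also have "\<dots> \<le> (\<Sum>n<R. card {v. (E ^^ n) u v})" by (rule card_UN_le) simp
    also have "\<dots> \<le> (\<Sum>n<R. d ^ n)" using ball_card[OF sg] d_def by (intro sum_mono) auto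
    also have "\<dots> \<le> d ^ R" using False by (intro geom_le) simp
    also have "\<dots> \<le> d ^ (4 * R)" using False R by (intro power_increasing) auto
    finally have "card V \<le> max_degree V E ^ (4 * R)" unfolding d_def .
    then show False using N by simp
  qed
qed



lemma nstring_iff:
  "(K \<subseteq> x \<and> J \<inter> (x - K) = {} \<and> y = (x - K) \<union> J) \<longleftrightarrow>
   (x = (y - J) \<union> K \<and> J \<subseteq> y \<and> K \<inter> y \<subseteq> J)"
  by blast

lemma nstring_char:
  "nstring J K y x = (if x = (y - J) \<union> K \<and> J \<subseteq> y \<and> K \<inter> y \<subseteq> J then 1 else 0)"
  unfolding nstring_def using nstring_iff[of K x J y] by simp

lemma Sdag_apply:
  assumes fin: "finite V"
  shows "apply_op V (Sdag V) \<psi> y = (if y \<subseteq> V then (\<Sum>v\<in>y. \<psi> (y - {v})) else 0)"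
proof -
  have "apply_op V (Sdag V) \<psi> y = (\<Sum>x\<in>Pow V. \<Sum>v\<in>V. (if x = y - {v} then (if v \<in> y then \<psi> x else 0) else 0))"
    unfolding apply_op_def Sdag_def
    by (intro sum.cong refl) (auto simp: sum_distrib_right nstring_char intro!: sum.cong)
  also have "\<dots> = (\<Sum>v\<in>V. \<Sum>x\<in>Pow V. (if x = y - {v} then (if v \<in> y then \<psi> x else 0) else 0))"
    by (rule sum.swap)
  also have "\<dots> = (\<Sum>v\<in>V. (if y - {v} \<subseteq> V \<and> v \<in> y then \<psi> (y - {v}) else 0))"
    using fin by (intro sum.cong refl) (simp add: sum.delta')
  also have "\<dots> = (if y \<subseteq> V then (\<Sum>v\<in>y. \<psi> (y - {v})) else 0)"
  proof (cases "y \<subseteq> V")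
    case True
    have "(\<Sum>v\<in>V. (if y - {v} \<subseteq> V \<and> v \<in> y then \<psi> (y - {v}) else 0))
        = (\<Sum>v\<in>V. (if v \<in> y then \<psi> (y - {v}) else 0))"
      using True by (intro sum.cong refl) auto
    also have "\<dots> = (\<Sum>v\<in>{v\<in>V. v \<in> y}. \<psi> (y - {v}))"
      using fin by (simp add: sum.inter_filter)
    also have "{v\<in>V. v \<in> y} = y" using True by blast
    finally show ?thesis using True by simp
  next
    case False
    have "\<And>v. v \<in> V \<Longrightarrow> \<not> (y - {v} \<subseteq> V)" using False by blast
    then show ?thesis using False by simp
  qed
  finally show ?thesis .
qed

lemma phi_formula:
  assumes fin: "finite V"
  shows "(apply_op V (Sdag V) ^^ p) vac y = (if y \<subseteq> V \<and> card y = p then (fact p :: complex) else 0)"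
proof (induction p arbitrary: y)
  case 0
  show ?case
  proof (cases "y \<subseteq> V")
    case True
    then have "finite y" using fin finite_subset by blast
    then show ?thesis using True by (auto simp: vac_def)
  next
    case False
    then have "y \<noteq> {}" by blast
    then show ?thesis using False by (simp add: vac_def)
  qed
next
  case (Suc p)
  show ?case
  proof (cases "y \<subseteq> V")
    case False
    then show ?thesis using Sdag_apply[OF fin] by simp
  next
    case True
    then have fy: "finite y" using fin finite_subset by blast
    have "(apply_op V (Sdag V) ^^ Suc p) vac y = (\<Sum>v\<in>y. (apply_op V (Sdag V) ^^ p) vac (y - {v}))"
      using Sdag_apply[OF fin] True by simp
    also have "\<dots> = (\<Sum>v\<in>y. (if card y = Suc p then (fact p :: complex) else 0))"
    proof (intro sum.cong refl)
      fix v assume v: "v \<in> y"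
      have "card (y - {v}) = card y - 1" using v fy by simp
      moreover have "card y \<ge> 1" using v fy by (metis One_nat_def Suc_leI card_gt_0_iff empty_iff)
      ultimately have "(card (y - {v}) = p) = (card y = Suc p)" by auto
      then show "(apply_op V (Sdag V) ^^ p) vac (y - {v}) = (if card y = Suc p then (fact p :: complex) else 0)"
        using Suc.IH[of "y - {v}"] True by auto
    qed
    also have "\<dots> = (if y \<subseteq> V \<and> card y = Suc p then (fact (Suc p) :: complex) else 0)"
      using True by simp
    finally show ?thesis .
  qed
qed

lemma Wstate_form:
  assumes fin: "finite V" and p: "p \<le> card V"
  shows "\<exists>\<beta>. \<beta> \<noteq> 0 \<and> (\<forall>y. Wstate V p y = (if y \<subseteq> V \<and> card y = p then \<beta> else 0))"
proof -
  define \<phi> where "\<phi> = (apply_op V (Sdag V) ^^ p) vac"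
  have phi: "\<And>y. \<phi> y = (if y \<subseteq> V \<and> card y = p then (fact p :: complex) else 0)"
    unfolding \<phi>_def by (rule phi_formula[OF fin])
  obtain y0 where y0: "y0 \<subseteq> V" "card y0 = p" using obtain_subset_with_card_n[OF p] by metis
  have "(cmod (\<phi> y0))\<^sup>2 \<le> (\<Sum>x\<in>Pow V. (cmod (\<phi> x))\<^sup>2)"
    using y0 fin by (intro member_le_sum) auto
  moreover have "(cmod (\<phi> y0))\<^sup>2 > 0" using phi y0 by simp
  ultimately have "(\<Sum>x\<in>Pow V. (cmod (\<phi> x))\<^sup>2) > 0" by linarith
  then have "vnorm V \<phi> > 0" unfolding vnorm_def by simp
  define \<beta> where "\<beta> = (fact p :: complex) / complex_of_real (vnorm V \<phi>)"
  have "\<beta> \<noteq> 0" unfolding \<beta>_def using \<open>vnorm V \<phi> > 0\<close> by simp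
  moreover have "\<forall>y. Wstate V p y = (if y \<subseteq> V \<and> card y = p then \<beta> else 0)"
    unfolding Wstate_def \<phi>_def[symmetric] Let_def \<beta>_def using phi by simp
  ultimately show ?thesis by blast
qed

lemma F_eq:
  assumes fin: "finite V" and p: "p \<le> card V"
    and eig: "\<forall>y \<subseteq> V. apply_op V H (Wstate V p) y = Ep p * Wstate V p y"
    and y: "y \<subseteq> V" "card y = p"
  shows "(\<Sum>x\<in>{x\<in>Pow V. card x = card y}. H y x) = Ep p"
proof -
  obtain \<beta> where b: "\<beta> \<noteq> 0" "\<And>y. Wstate V p y = (if y \<subseteq> V \<and> card y = p then \<beta> else 0)"
    using Wstate_form[OF fin p] by blast
  have "apply_op V H (Wstate V p) y = (\<Sum>x\<in>Pow V. (if card x = p then H y x * \<beta> else 0))"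
    unfolding apply_op_def b(2) by (intro sum.cong refl) auto
  also have "\<dots> = (\<Sum>x\<in>{x\<in>Pow V. card x = p}. H y x * \<beta>)"
    using fin by (intro sum.inter_filter[symmetric]) simp
  also have "\<dots> = (\<Sum>x\<in>{x\<in>Pow V. card x = card y}. H y x) * \<beta>"
    using y by (simp add: sum_distrib_right)
  finally have A: "apply_op V H (Wstate V p) y = (\<Sum>x\<in>{x\<in>Pow V. card x = card y}. H y x) * \<beta>" .
  have "apply_op V H (Wstate V p) y = Ep p * \<beta>" using eig y b(2) by simp
  then have "(\<Sum>x\<in>{x\<in>Pow V. card x = card y}. H y x) * \<beta> = Ep p * \<beta>" using A by simp
  then show ?thesis using b(1) by simp
qed

definition gJK :: "'a set \<Rightarrow> 'a set \<Rightarrow> 'a set \<Rightarrow> 'a set \<Rightarrow> complex" where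
  "gJK V J K y = (if J \<subseteq> y \<and> K \<inter> y \<subseteq> J \<and> (y - J) \<union> K \<subseteq> V \<and> card ((y - J) \<union> K) = card y then 1 else 0)"

lemma F_expand:
  assumes fin: "finite V"
    and cH: "\<forall>y x. y \<subseteq> V \<longrightarrow> x \<subseteq> V \<longrightarrow> H y x = (\<Sum>J\<in>Pow V. \<Sum>K\<in>Pow V. c J K * nstring J K y x)"
    and y: "y \<subseteq> V"
  shows "(\<Sum>x\<in>{x\<in>Pow V. card x = card y}. H y x) = (\<Sum>J\<in>Pow V. \<Sum>K\<in>Pow V. c J K * gJK V J K y)"
proof -
  define X where "X = {x\<in>Pow V. card x = card y}"
  have fX: "finite X" unfolding X_def using fin by simp
  have "(\<Sum>x\<in>X. H y x) = (\<Sum>x\<in>X. \<Sum>J\<in>Pow V. \<Sum>K\<in>Pow V. c J K * nstring J K y x)"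
    using cH y unfolding X_def by (intro sum.cong refl) auto
  also have "\<dots> = (\<Sum>J\<in>Pow V. \<Sum>x\<in>X. \<Sum>K\<in>Pow V. c J K * nstring J K y x)"
    by (rule sum.swap)
  also have "\<dots> = (\<Sum>J\<in>Pow V. \<Sum>K\<in>Pow V. \<Sum>x\<in>X. c J K * nstring J K y x)"
    by (intro sum.cong refl sum.swap)
  also have "\<dots> = (\<Sum>J\<in>Pow V. \<Sum>K\<in>Pow V. c J K * gJK V J K y)"
  proof (intro sum.cong refl)
    fix J K
    have "(\<Sum>x\<in>X. c J K * nstring J K y x)
        = (\<Sum>x\<in>X. if x = (y - J) \<union> K then (if J \<subseteq> y \<and> K \<inter> y \<subseteq> J then c J K else 0) else 0)"
      unfolding nstring_char by (intro sum.cong refl) auto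
    also have "\<dots> = (if (y - J) \<union> K \<in> X then (if J \<subseteq> y \<and> K \<inter> y \<subseteq> J then c J K else 0) else 0)"
      using fX by (simp add: sum.delta')
    also have "\<dots> = c J K * gJK V J K y"
      unfolding gJK_def X_def by auto
    finally show "(\<Sum>x\<in>X. c J K * nstring J K y x) = c J K * gJK V J K y" .
  qed
  finally show ?thesis unfolding X_def .
qed

lemma gJK_local:
  assumes fin: "finite V" and u: "u \<in> V" "u \<notin> J" "u \<notin> K" "u \<notin> y" and y: "y \<subseteq> V"
  shows "gJK V J K (insert u y) = gJK V J K y"
proof -
  have fy: "finite y" using fin y finite_subset by blast
  have e1: "(J \<subseteq> insert u y) = (J \<subseteq> y)" using u by blast
  have e2: "(K \<inter> insert u y \<subseteq> J) = (K \<inter> y \<subseteq> J)" using u by blast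
  have e3: "(insert u y - J) \<union> K = insert u ((y - J) \<union> K)" using u by blast
  show ?thesis
  proof (cases "(y - J) \<union> K \<subseteq> V")
    case True
    then have ff: "finite ((y - J) \<union> K)" using fin finite_subset by blast
    have "u \<notin> (y - J) \<union> K" using u by blast
    then have "card (insert u ((y - J) \<union> K)) = Suc (card ((y - J) \<union> K))" using ff by simp
    moreover have "card (insert u y) = Suc (card y)" using fy u by simp
    ultimately show ?thesis unfolding gJK_def e1 e2 e3 using True u by simp
  next
    case False
    then show ?thesis unfolding gJK_def e1 e2 e3 by auto
  qed
qed

lemma range_dist:
  assumes fS: "finite S" and r: "string_range E S \<le> R" and ij: "i \<in> S" "j \<in> S"
  shows "gdist E i j < R"
proof -
  define B where "B = Suc (\<Sum>a\<in>S. \<Sum>b\<in>S. gdist E a b)"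
  have "0 < B \<and> (\<forall>a\<in>S. \<forall>b\<in>S. gdist E a b < B)"
  proof (intro conjI ballI)
    show "0 < B" unfolding B_def by simp
    fix a b assume ab: "a \<in> S" "b \<in> S"
    have "gdist E a b \<le> (\<Sum>b'\<in>S. gdist E a b')" using ab fS by (intro member_le_sum) auto
    also have "\<dots> \<le> (\<Sum>a'\<in>S. \<Sum>b'\<in>S. gdist E a' b')" using ab fS by (intro member_le_sum) auto
    finally show "gdist E a b < B" unfolding B_def by simp
  qed
  then have "0 < string_range E S \<and> (\<forall>a\<in>S. \<forall>b\<in>S. gdist E a b < string_range E S)"
    unfolding string_range_def by (rule LeastI)
  then show ?thesis using ij r by fastforce
qed



lemma second_diff:
  assumes fin: "finite V"
    and c: "\<forall>J K. c J K \<noteq> 0 \<longrightarrow> J \<subseteq> V \<and> K \<subseteq> V \<and> card (J \<union> K) \<le> k \<and> string_range E (J \<union> K) \<le> R"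
    and uv: "u \<in> V" "v \<in> V" "u \<noteq> v" "R \<le> gdist E u v"
    and y: "y \<subseteq> V" "u \<notin> y" "v \<notin> y"
  shows "(\<Sum>J\<in>Pow V. \<Sum>K\<in>Pow V. c J K * gJK V J K (insert u (insert v y)))
       - (\<Sum>J\<in>Pow V. \<Sum>K\<in>Pow V. c J K * gJK V J K (insert u y))
       - (\<Sum>J\<in>Pow V. \<Sum>K\<in>Pow V. c J K * gJK V J K (insert v y))
       + (\<Sum>J\<in>Pow V. \<Sum>K\<in>Pow V. c J K * gJK V J K y) = 0"
proof -
  have "(\<Sum>J\<in>Pow V. \<Sum>K\<in>Pow V. c J K * gJK V J K (insert u (insert v y)) - c J K * gJK V J K (insert u y)
          - c J K * gJK V J K (insert v y) + c J K * gJK V J K y) = 0"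
  proof (intro sum.neutral ballI)
    fix J K assume JK: "J \<in> Pow V" "K \<in> Pow V"
    show "c J K * gJK V J K (insert u (insert v y)) - c J K * gJK V J K (insert u y)
          - c J K * gJK V J K (insert v y) + c J K * gJK V J K y = 0"
    proof (cases "c J K = 0")
      case True then show ?thesis by simp
    next
      case False
      then have sr: "string_range E (J \<union> K) \<le> R" using c by blast
      have fJK: "finite (J \<union> K)" using JK fin finite_subset by blast
      have "\<not> (u \<in> J \<union> K \<and> v \<in> J \<union> K)"
      proof
        assume "u \<in> J \<union> K \<and> v \<in> J \<union> K"
        then have "gdist E u v < R" using range_dist[OF fJK sr] by blast
        then show False using uv by simp
      qed
      then consider "u \<notin> J \<union> K" | "v \<notin> J \<union> K" by blast
      then show ?thesis
      proof cases
        case 1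
        have a: "gJK V J K (insert u (insert v y)) = gJK V J K (insert v y)"
          using 1 uv y by (intro gJK_local[OF fin]) auto
        have b: "gJK V J K (insert u y) = gJK V J K y"
          using 1 uv y by (intro gJK_local[OF fin]) auto
        show ?thesis unfolding a b by simp
      next
        case 2
        have a: "gJK V J K (insert v (insert u y)) = gJK V J K (insert u y)"
          using 2 uv y by (intro gJK_local[OF fin]) auto
        have b: "gJK V J K (insert v y) = gJK V J K y"
          using 2 uv y by (intro gJK_local[OF fin]) auto
        show ?thesis unfolding insert_commute[of u v] a b by simp
      qed
    qed
  qed
  then show ?thesis by (simp add: sum.distrib sum_subtractf)
qed


theorem theorem2:
  fixes V :: "'a set" and E :: "'a \<Rightarrow> 'a \<Rightarrow> bool" and k R :: nat
    and H :: "'a set \<Rightarrow> 'a set \<Rightarrow> complex" and Ep :: "nat \<Rightarrow> complex"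
  assumes "simple_graph V E" and "connected_graph V E"
    and "0 < k" and "0 < R"
    and "card V > 2 * k * (max_degree V E ^ (4 * R) + 1)"
    and "local_op V E k R H"
    and "\<forall>p \<le> card V. \<forall>y \<subseteq> V. apply_op V H (Wstate V p) y = Ep p * Wstate V p y"
  shows "\<exists>\<Omega> \<omega> :: complex. \<forall>p \<le> card V. Ep p = \<Omega> + \<omega> * of_nat p"
proof -
  have fin: "finite V" using assms(1) unfolding simple_graph_def by blast
  obtain c where c: "\<forall>J K. c J K \<noteq> 0 \<longrightarrow> J \<subseteq> V \<and> K \<subseteq> V \<and> card (J \<union> K) \<le> k \<and> string_range E (J \<union> K) \<le> R"
    and cH: "\<forall>y x. y \<subseteq> V \<longrightarrow> x \<subseteq> V \<longrightarrow> H y x = (\<Sum>J\<in>Pow V. \<Sum>K\<in>Pow V. c J K * nstring J K y x)"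
    using assms(6) unfolding local_op_def by blast
  have "2 * (max_degree V E ^ (4 * R) + 1) \<le> 2 * k * (max_degree V E ^ (4 * R) + 1)"
    using assms(3) by (intro mult_right_mono) auto
  then have N: "2 * (max_degree V E ^ (4 * R) + 1) < card V" using assms(5) by linarith
  obtain u v where uv: "u \<in> V" "v \<in> V" "R \<le> gdist E u v"
    using far_pair[OF assms(1) assms(2) assms(4) N] by blast
  have "u \<noteq> v"
  proof
    assume "u = v"
    moreover have "gdist E u u = 0" unfolding gdist_def by (rule Least_eq_0) simp
    ultimately show False using uv assms(4) by simp
  qed
  define G where "G = (\<lambda>y. \<Sum>J\<in>Pow V. \<Sum>K\<in>Pow V. c J K * gJK V J K y)"
  have FE: "G y = Ep (card y)" if "y \<subseteq> V" for y
  proof -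
    have "card y \<le> card V" using card_mono[OF fin that] .
    then have "(\<Sum>x\<in>{x\<in>Pow V. card x = card y}. H y x) = Ep (card y)"
      using assms(7) that by (intro F_eq[OF fin]) auto
    then show ?thesis unfolding G_def using F_expand[OF fin cH that] by simp
  qed
  have rec: "Ep (Suc (Suc p)) - Ep (Suc p) - Ep (Suc p) + Ep p = 0" if p: "Suc (Suc p) \<le> card V" for p
  proof -
    have "card (V - {u, v}) = card V - 2" using uv \<open>u \<noteq> v\<close> fin by (simp add: card_Diff_subset)
    then have "p \<le> card (V - {u, v})" using p by simp
    then obtain y where y: "y \<subseteq> V - {u, v}" "card y = p" "finite y"
      using obtain_subset_with_card_n by metis
    have yV: "y \<subseteq> V" "u \<notin> y" "v \<notin> y" using y by auto
    have c1: "card (insert u (insert v y)) = Suc (Suc p)" using y \<open>u \<noteq> v\<close> yV by simp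
    have c2: "card (insert u y) = Suc p" using y yV by simp
    have c3: "card (insert v y) = Suc p" using y yV by simp
    have "G (insert u (insert v y)) - G (insert u y) - G (insert v y) + G y = 0"
      unfolding G_def using second_diff[OF fin c uv(1,2) \<open>u \<noteq> v\<close> uv(3) yV] by simp
    moreover have "G (insert u (insert v y)) = Ep (Suc (Suc p))" using FE[of "insert u (insert v y)"] c1 yV uv by simp
    moreover have "G (insert u y) = Ep (Suc p)" using FE[of "insert u y"] c2 yV uv by simp
    moreover have "G (insert v y) = Ep (Suc p)" using FE[of "insert v y"] c3 yV uv by simp
    moreover have "G y = Ep p" using FE[of y] y yV by simp
    ultimately show ?thesis by simp
  qed
  define \<Omega> where "\<Omega> = Ep 0"
  define \<omega> where "\<omega> = Ep 1 - Ep 0"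
  have ind: "Suc n \<le> card V \<longrightarrow> Ep n = \<Omega> + \<omega> * of_nat n \<and> Ep (Suc n) = \<Omega> + \<omega> * of_nat (Suc n)" for n
  proof (induction n)
    case 0
    then show ?case unfolding \<Omega>_def \<omega>_def by simp
  next
    case (Suc n)
    show ?case
    proof
      assume a: "Suc (Suc n) \<le> card V"
      then have h: "Ep n = \<Omega> + \<omega> * of_nat n" "Ep (Suc n) = \<Omega> + \<omega> * of_nat (Suc n)" using Suc by auto
      have "Ep (Suc (Suc n)) = 2 * Ep (Suc n) - Ep n" using rec[OF a] by (simp add: algebra_simps)
      also have "\<dots> = \<Omega> + \<omega> * of_nat (Suc (Suc n))" unfolding h by (simp add: algebra_simps)
      finally show "Ep (Suc n) = \<Omega> + \<omega> * of_nat (Suc n) \<and> Ep (Suc (Suc n)) = \<Omega> + \<omega> * of_nat (Suc (Suc n))"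
        using h by simp
    qed
  qed
  have "\<forall>p \<le> card V. Ep p = \<Omega> + \<omega> * of_nat p"
  proof (intro allI impI)
    fix p assume p: "p \<le> card V"
    show "Ep p = \<Omega> + \<omega> * of_nat p"
    proof (cases p)
      case 0 then show ?thesis unfolding \<Omega>_def by simp
    next
      case (Suc m) then show ?thesis using ind[of m] p by simp
    qed
  qed
  then show ?thesis by blast
qed

end
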